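(* For every fixed $\varepsilon>0$ there is a constant $K_\varepsilon<\infty$ such that for all $n\ge3$, $$P\big(|X_n-\mu_n|\ge\varepsilon\mu_n\big)\le n^{-2\varepsilon\ln\ln n+K_\varepsilon}.$$ That is, $P(|X_n-\mu_n|\ge\varepsilon\mu_n)\le n^{-2\varepsilon\ln\ln n+O(1)}$.
   Context: Let $X_n$ be the number of comparisons used by randomized Quicksort (uniform random pivot) on $n$ distinct numbers. Equivalently, $X_0=0$ and $$X_n\stackrel{d}{=}X_{U_n-1}+X^*_{n-U_n}+n-1,$$ with $U_n$ uniform on $\{1,\dots,n\}$, $X_j^*\stackrel{d}{=}X_j$, all independent. $\mu_n:=\mathbf EX_n=2(n+1)H_n-4n$, where $H_n=\sum_{k=1}^n1/k$. *)

theory Defs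
  imports "HOL-Probability.Probability"
begin

text \<open>Distribution of the number of comparisons of randomized Quicksort on n distinct keys:
  X_0 = 0, X_n = X_{U-1} + X'_{n-U} + n - 1 with U uniform on {1..n}, all independent.\<close>
function qs_comparisons :: "nat \<Rightarrow> nat pmf" where
  "qs_comparisons 0 = return_pmf 0"
| "qs_comparisons (Suc n) =
     bind_pmf (pmf_of_set {1..Suc n}) (\<lambda>u.
       bind_pmf (qs_comparisons (u - 1)) (\<lambda>a.
         bind_pmf (qs_comparisons (Suc n - u)) (\<lambda>b.
           return_pmf (a + b + n))))"
  by pat_completeness auto
termination
  by (relation "Wellfounded.measure id") auto

definition qs_mean :: "nat \<Rightarrow> real" where
  "qs_mean n = 2 * (real n + 1) * harm n - 4 * real n"

end

theory Submission
  imports Defs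
begin


lemma qs_fin: "finite (set_pmf (qs_comparisons n))"
proof (induction n rule: less_induct)
  case (less n)
  show ?case
  proof (cases n)
    case 0 then show ?thesis by simp
  next
    case (Suc m)
    have "\<And>u. u \<in> {1..Suc m} \<Longrightarrow> u - 1 < n \<and> Suc m - u < n" using Suc by auto
    then show ?thesis using Suc less by (auto simp del: qs_comparisons.simps simp add: qs_comparisons.simps(2))
  qed
qed

lemma exp_bind:
  assumes "finite (set_pmf p)" "\<And>x. x \<in> set_pmf p \<Longrightarrow> finite (set_pmf (f x))"
  shows "measure_pmf.expectation (p \<bind> f) (h::_\<Rightarrow>real) =
         measure_pmf.expectation p (\<lambda>x. measure_pmf.expectation (f x) h)"
  by (subst pmf_expectation_bind[of "set_pmf p"]) (auto simp: integral_measure_pmf[of "set_pmf p"] assms)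

lemma exp_return: "measure_pmf.expectation (return_pmf x) (h::_\<Rightarrow>real) = h x"
  by (subst integral_measure_pmf[of "{x}"]) auto

definition E :: "nat \<Rightarrow> real \<Rightarrow> real" where
  "E n l = measure_pmf.expectation (qs_comparisons n) (\<lambda>x. exp (l * (real x - qs_mean n)))"

lemma E_Suc:
  "E (Suc n) l = (\<Sum>u\<in>{1..Suc n}. exp (l * (real n + qs_mean (u-1) + qs_mean (Suc n - u) - qs_mean (Suc n)))
      * E (u-1) l * E (Suc n - u) l) / real (Suc n)"
proof -
  let ?h = "\<lambda>x. exp (l * (real x - qs_mean (Suc n)))"
  have "E (Suc n) l = (\<Sum>u\<in>{1..Suc n}. measure_pmf.expectation (qs_comparisons (u - 1) \<bind>
         (\<lambda>a. qs_comparisons (Suc n - u) \<bind> (\<lambda>b. return_pmf (a + b + n)))) ?h /\<^sub>R real (card {1..Suc n}))"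
    unfolding E_def qs_comparisons.simps(2)
    by (rule pmf_expectation_bind_pmf_of_set) (auto simp: qs_fin)
  also have "\<dots> = (\<Sum>u\<in>{1..Suc n}. exp (l * (real n + qs_mean (u-1) + qs_mean (Suc n - u) - qs_mean (Suc n)))
      * E (u-1) l * E (Suc n - u) l / real (Suc n))"
  proof (rule sum.cong[OF refl])
    fix u assume u: "u \<in> {1..Suc n}"
    define c where "c = exp (l * (real n + qs_mean (u-1) + qs_mean (Suc n - u) - qs_mean (Suc n)))"
    have eq: "?h (a + b + n) = c * exp (l * (real a - qs_mean (u-1))) * exp (l * (real b - qs_mean (Suc n - u)))" for a b
      unfolding c_def mult_exp_exp by (rule arg_cong[where f=exp]) (simp add: algebra_simps)
    have "measure_pmf.expectation (qs_comparisons (u - 1) \<bind>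
         (\<lambda>a. qs_comparisons (Suc n - u) \<bind> (\<lambda>b. return_pmf (a + b + n)))) ?h
        = measure_pmf.expectation (qs_comparisons (u - 1)) (\<lambda>a. measure_pmf.expectation (qs_comparisons (Suc n - u)) (\<lambda>b. ?h (a+b+n)))"
      by (simp add: exp_bind qs_fin exp_return)
    also have "\<dots> = c * E (u-1) l * E (Suc n - u) l"
      unfolding eq E_def by simp
    finally show "measure_pmf.expectation (qs_comparisons (u - 1) \<bind>
         (\<lambda>a. qs_comparisons (Suc n - u) \<bind> (\<lambda>b. return_pmf (a + b + n)))) ?h /\<^sub>R real (card {1..Suc n})
       = c * E (u-1) l * E (Suc n - u) l / real (Suc n)" by (simp add: field_simps)
  qed
  finally show ?thesis by (simp only: sum_divide_distrib)
qed



lemma harm_diff_le: "harm (j + m) - harm j \<le> real m / (real j + 1)"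
proof (induction m)
  case 0 then show ?case by simp
next
  case (Suc m)
  have "harm (j + Suc m) - harm j = (harm (j + m) - harm j) + inverse (real (Suc (j + m)))"
    by (simp add: harm_Suc)
  also have "inverse (real (Suc (j + m))) \<le> 1 / (real j + 1)"
    by (simp add: inverse_eq_divide frac_le)
  finally show ?case using Suc by (simp add: add_divide_distrib)
qed

lemma harm_mono_add: "harm j \<le> (harm (j + m) :: real)"
proof (induction m)
  case 0 then show ?case by simp
next
  case (Suc m) then show ?case by (simp add: harm_Suc) (smt (verit) inverse_nonnegative_iff_nonnegative of_nat_0_le_iff)
qed

lemma harm_diff_ge: "m \<ge> 1 \<Longrightarrow> harm (j + m) - harm j \<ge> 1 / (real (j + m))"
proof -
  assume "m \<ge> 1"
  then obtain m' where m: "m = Suc m'" by (cases m) auto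
  have "harm (j + m) = harm (j + m') + inverse (real (j + m))" using m by (simp add: harm_Suc)
  then show ?thesis using harm_mono_add[of j m'] by (simp add: inverse_eq_divide)
qed

lemma mean_rec: "real (Suc N) * qs_mean (Suc N) = (real N + 2) * qs_mean N + 2 * real N"
  unfolding qs_mean_def by (simp add: harm_Suc field_simps)

lemma mean_sum: "real N * qs_mean N = real N * (real N - 1) + 2 * (\<Sum>k<N. qs_mean k)"
proof (induction N)
  case 0 then show ?case by simp
next
  case (Suc N)
  show ?case using mean_rec[of N] Suc by (simp add: algebra_simps)
qed

lemma toll_sum: "(\<Sum>u\<in>{1..Suc n}. real n + qs_mean (u-1) + qs_mean (Suc n - u) - qs_mean (Suc n)) = 0"
proof -
  have s1: "(\<Sum>u\<in>{1..Suc n}. qs_mean (u-1)) = (\<Sum>k<Suc n. qs_mean k)"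
    by (rule sum.reindex_bij_witness[where i="\<lambda>k. k+1" and j="\<lambda>u. u - 1"]) auto
  have s2: "(\<Sum>u\<in>{1..Suc n}. qs_mean (Suc n - u)) = (\<Sum>k<Suc n. qs_mean k)"
    by (rule sum.reindex_bij_witness[where i="\<lambda>k. Suc n - k" and j="\<lambda>u. Suc n - u"]) auto
  have "(\<Sum>u\<in>{1..Suc n}. real n + qs_mean (u-1) + qs_mean (Suc n - u) - qs_mean (Suc n))
     = (\<Sum>u\<in>{1..Suc n}. real n) + (\<Sum>u\<in>{1..Suc n}. qs_mean (u-1)) + (\<Sum>u\<in>{1..Suc n}. qs_mean (Suc n - u)) - (\<Sum>u\<in>{1..Suc n}. qs_mean (Suc n))"
    by (simp only: sum.distrib sum_subtractf)
  also have "\<dots> = real (Suc n) * real n + 2 * (\<Sum>k<Suc n. qs_mean k) - real (Suc n) * qs_mean (Suc n)"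
    unfolding s1 s2 by simp
  also have "\<dots> = 0" using mean_sum[of "Suc n"] by simp
  finally show ?thesis .
qed

lemma toll_bounds:
  assumes "u \<in> {1..Suc n}"
  shows "\<bar>real n + qs_mean (u-1) + qs_mean (Suc n - u) - qs_mean (Suc n)\<bar> \<le> real n + 2"
proof -
  define j where "j = u - 1"
  define k where "k = Suc n - u"
  have jk: "Suc n = j + (k + 1)" "Suc n = k + (j + 1)" using assms by (auto simp: j_def k_def)
  have d1: "harm (Suc n) - harm j \<le> real (k+1) / (real j + 1)" using harm_diff_le[of j "k+1"] unfolding jk(1)[symmetric] by simp
  have d2: "harm (Suc n) - harm k \<le> real (j+1) / (real k + 1)" using harm_diff_le[of k "j+1"] unfolding jk(2)[symmetric] by simp
  have e1: "harm (Suc n) - harm j \<ge> 1 / real (Suc n)" using harm_diff_ge[of "k+1" j] unfolding jk(1)[symmetric] by simp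
  have e2: "harm (Suc n) - harm k \<ge> 1 / real (Suc n)" using harm_diff_ge[of "j+1" k] unfolding jk(2)[symmetric] by simp
  have key: "qs_mean (Suc n) - qs_mean j - qs_mean k
     = 2 * ((real j + 1) * (harm (Suc n) - harm j) + (real k + 1) * (harm (Suc n) - harm k)) - 4"
    unfolding qs_mean_def using jk by (simp add: algebra_simps)
  have u1: "(real j + 1) * (harm (Suc n) - harm j) \<le> real k + 1"
    using d1 by (simp add: field_simps)
  have u2: "(real k + 1) * (harm (Suc n) - harm k) \<le> real j + 1"
    using d2 by (simp add: field_simps)
  have l1: "(real j + 1) * (harm (Suc n) - harm j) \<ge> (real j + 1) / real (Suc n)"
    using mult_left_mono[OF e1, of "real j + 1"] by simp
  have l2: "(real k + 1) * (harm (Suc n) - harm k) \<ge> (real k + 1) / real (Suc n)"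
    using mult_left_mono[OF e2, of "real k + 1"] by simp
  have "(real j + 1) / real (Suc n) + (real k + 1) / real (Suc n) = (real n + 2) / real (Suc n)"
    using jk by (simp add: add_divide_distrib[symmetric])
  also have "\<dots> \<ge> 1" by simp
  finally have lo: "(real j + 1) / real (Suc n) + (real k + 1) / real (Suc n) \<ge> 1" .
  have jkn: "real j + real k = real n" using jk by simp
  have gen: "\<And>X Y P Q D. D = 2 * (X + Y) - 4 \<Longrightarrow> X \<le> real k + 1 \<Longrightarrow> Y \<le> real j + 1 \<Longrightarrow>
     P \<le> X \<Longrightarrow> Q \<le> Y \<Longrightarrow> 1 \<le> P + Q \<Longrightarrow> \<bar>real n - D\<bar> \<le> real n + 2"
    using jkn by (simp add: abs_le_iff)
  have "\<bar>real n - (qs_mean (Suc n) - qs_mean j - qs_mean k)\<bar> \<le> real n + 2"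
    by (rule gen[OF key u1 u2 l1 l2 lo])
  then show ?thesis unfolding j_def[symmetric] k_def[symmetric] by (simp add: algebra_simps)
qed



lemma exp_quad: fixes y :: real assumes "\<bar>y\<bar> \<le> 1" shows "exp y \<le> 1 + y + y\<^sup>2"
proof (cases "y \<ge> 0")
  case True then show ?thesis using exp_bound[of y] assms by simp
next
  case False
  have h1: "exp (-y) \<ge> 1 - y" using exp_ge_add_one_self[of "-y"] by simp
  have "y\<^sup>2 > 0" using False by simp
  then have pos: "1 + y + y\<^sup>2 > 0" using False assms by linarith
  have A: "exp (-y) * (1 + y + y\<^sup>2) \<ge> (1 - y) * (1 + y + y\<^sup>2)"
    using h1 pos by (simp add: mult_right_mono)
  have B: "(1 - y) * (1 + y + y\<^sup>2) = 1 - y^3" by (simp add: algebra_simps power2_eq_square power3_eq_cube)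
  have C: "y^3 \<le> 0" using False by (metis mult_nonpos_nonneg zero_le_power2 power3_eq_cube power2_eq_square mult.assoc linorder_not_le order.strict_implies_order)
  have "exp (-y) * (1 + y + y\<^sup>2) \<ge> 1" using A B C by linarith
  then have "exp y * (exp (-y) * (1 + y + y\<^sup>2)) \<ge> exp y" by simp
  then show ?thesis by (simp add: mult.assoc[symmetric] exp_minus_inverse)
qed

lemma geo_sum: fixes \<beta> :: real assumes "\<beta> > 0"
  shows "(\<Sum>u\<in>{1..n}. exp (- \<beta> * real u)) \<le> 1 / \<beta>"
proof -
  define r where "r = exp (- \<beta>)"
  have r0: "0 < r" "r < 1" using assms by (auto simp: r_def)
  have pw: "exp (- \<beta> * real u) = r ^ u" for u
    by (simp add: r_def exp_of_nat_mult[symmetric] mult.commute)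
  have closed: "(\<Sum>u\<in>{1..n}. r ^ u) * (1 - r) = r - r ^ Suc n"
  proof (induction n)
    case 0 then show ?case by simp
  next
    case (Suc n)
    have "(\<Sum>u\<in>{1..Suc n}. r ^ u) = (\<Sum>u\<in>{1..n}. r ^ u) + r ^ Suc n" by simp
    then have "(\<Sum>u\<in>{1..Suc n}. r ^ u) * (1 - r) = (\<Sum>u\<in>{1..n}. r ^ u) * (1 - r) + r ^ Suc n * (1 - r)"
      by (simp add: distrib_right)
    also have "\<dots> = r - r ^ Suc (Suc n)" using Suc by (simp add: algebra_simps)
    finally show ?case .
  qed
  have "(\<Sum>u\<in>{1..n}. r ^ u) = (r - r ^ Suc n) / (1 - r)"
    using closed r0 by (simp add: field_simps)
  also have "\<dots> \<le> r / (1 - r)" using r0 by (intro divide_right_mono) auto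
  also have "r / (1 - r) \<le> 1 / \<beta>"
  proof -
    have "exp \<beta> \<ge> 1 + \<beta>" by (rule exp_ge_add_one_self)
    then have "r * (1 + \<beta>) \<le> 1" using r0 unfolding r_def
      by (metis exp_minus_inverse mult_left_mono order.strict_implies_order mult.commute)
    then show ?thesis using r0 assms by (simp add: field_simps)
  qed
  finally show ?thesis by (simp only: pw)
qed

lemma sum_um: "6 * (\<Sum>u\<in>{1..n}. real u * (m - real u)) = 3 * m * real n * (real n + 1) - real n * (real n + 1) * (2 * real n + 1)"
proof (induction n)
  case 0 then show ?case by simp
next
  case (Suc n)
  have "(\<Sum>u\<in>{1..Suc n}. real u * (m - real u)) = (\<Sum>u\<in>{1..n}. real u * (m - real u)) + (real n + 1) * (m - (real n + 1))" by (simp add: add.commute)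
  then show ?case using Suc by (simp add: algebra_simps)
qed



lemma taylor_u:
  fixes s c ab P :: real
  assumes s: "0 \<le> s" "s \<le> 1/2" and c: "\<bar>c\<bar> \<le> 1" and ab: "0 \<le> ab" "ab \<le> 1/16" and P: "P \<ge> 200 * ab"
  shows "exp (s * c - P) \<le> 1 + s * c + s\<^sup>2 - 7 * ab"
proof -
  define R where "R = 1 + s * c + s\<^sup>2"
  have sc: "\<bar>s * c\<bar> \<le> s" using s c by (simp add: abs_mult mult_left_le)
  have eR: "exp (s * c) \<le> R"
  proof -
    have "exp (s * c) \<le> 1 + s * c + (s * c)\<^sup>2" using exp_quad[of "s*c"] sc s by simp
    also have "(s * c)\<^sup>2 \<le> s\<^sup>2"
      using sc by (metis abs_ge_zero abs_of_nonneg power2_abs power_mono s(1))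
    finally show ?thesis unfolding R_def by simp
  qed
  have R2: "R \<ge> 1/2" unfolding R_def using sc s by (simp add: abs_le_iff) (smt (verit) zero_le_power2)
  have P0: "P \<ge> 0" using P ab by linarith
  have eP: "exp (-P) \<le> 1 / (1 + P)"
  proof -
    have "1 + P \<le> exp P" by (rule exp_ge_add_one_self)
    then show ?thesis using P0 by (simp add: exp_minus field_simps)
  qed
  have "exp (s * c - P) = exp (s * c) * exp (-P)" by (simp add: exp_diff exp_minus field_simps)
  also have "\<dots> \<le> R * (1 / (1 + P))"
    using eR eP R2 by (intro mult_mono) auto
  also have "R * (1 / (1 + P)) = R - R * (P / (1 + P))" using P0 by (simp add: field_simps)
  also have "\<dots> \<le> R - 7 * ab"
  proof -
    have q: "P / (1 + P) \<ge> 14 * ab"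
    proof -
      have "P * (1 - 14 * ab) \<ge> 200 * ab * (1 / 8)"
        using P ab by (intro mult_mono) auto
      then have "P \<ge> 14 * ab * (1 + P)" using ab by (simp add: algebra_simps)
      then show ?thesis using P0 by (simp add: field_simps)
    qed
    have "R * (P / (1 + P)) \<ge> (1/2) * (14 * ab)"
      using R2 q ab by (intro mult_mono) auto
    then show ?thesis by simp
  qed
  finally show ?thesis unfolding R_def by simp
qed

lemma prod_bound:
  fixes a b s :: real
  assumes a: "a \<ge> 0" and b: "b \<ge> 1/4" and sab: "a + b = s"
  shows "(exp a - 1) * (exp b - 1) \<ge> exp s / 10 * min a 1"
proof -
  have eq: "(exp a - 1) * (exp b - 1) = exp s * ((1 - exp (-a)) * (1 - exp (-b)))"
    using sab by (simp add: exp_minus exp_add[symmetric] field_simps)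
  have hb: "1 - exp (-b) \<ge> 1/5"
  proof -
    have "exp (1/4::real) \<ge> 5/4" using exp_ge_add_one_self[of "1/4::real"] by simp
    moreover have "exp b \<ge> exp (1/4)" using b by simp
    ultimately have "exp b \<ge> 5/4" by linarith
    then have "exp (-b) \<le> 4/5" by (simp add: exp_minus field_simps)
    then show ?thesis by simp
  qed
  have ha: "1 - exp (-a) \<ge> min a 1 / 2"
  proof -
    have "1 + a \<le> exp a" by (rule exp_ge_add_one_self)
    then have "exp (-a) \<le> 1 / (1 + a)" using a by (simp add: exp_minus field_simps)
    moreover have "1 - 1 / (1 + a) \<ge> min a 1 / 2" using a by (auto simp: field_simps min_def mult_left_le)
    ultimately show ?thesis by linarith
  qed
  have "(1 - exp (-a)) * (1 - exp (-b)) \<ge> (min a 1 / 2) * (1/5)"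
    using ha hb a by (intro mult_mono) auto
  then have "exp s * ((1 - exp (-a)) * (1 - exp (-b))) \<ge> exp s * ((min a 1 / 2) * (1/5))"
    by (intro mult_left_mono) auto
  then show ?thesis unfolding eq by simp
qed

lemma crude_u:
  fixes s c a b :: real
  assumes s: "s \<ge> 1/2" and c: "c \<le> 1" and a: "a \<ge> 0" and b: "b \<ge> 0" and sab: "a + b = s"
  shows "exp (s * c - 200 * ((exp a - 1) * (exp b - 1)))
     \<le> exp s * (exp (- 20 * exp s * a) + exp (- 20 * exp s * b) + exp (- 20 * exp s))"
proof -
  have "\<exists>m. m \<in> {a, b} \<and> (exp a - 1) * (exp b - 1) \<ge> exp s / 10 * min m 1"
  proof (cases "b \<ge> 1/4")
    case True then show ?thesis using prod_bound[OF a True sab] by auto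
  next
    case False
    then have "a \<ge> 1/4" using s sab by linarith
    then show ?thesis using prod_bound[OF b _, of a s] sab by (auto simp: mult.commute add.commute)
  qed
  then obtain m where m: "m \<in> {a, b}" "(exp a - 1) * (exp b - 1) \<ge> exp s / 10 * min m 1" by blast
  have sc: "s * c \<le> s" using s c by (simp add: mult_left_le)
  have "exp (s * c - 200 * ((exp a - 1) * (exp b - 1))) \<le> exp (s - 20 * exp s * min m 1)"
    using m(2) sc by simp
  also have "\<dots> = exp s * exp (- 20 * exp s * min m 1)" by (simp add: exp_diff exp_minus field_simps)
  also have "exp (- 20 * exp s * min m 1) \<le> exp (- 20 * exp s * a) + exp (- 20 * exp s * b) + exp (- 20 * exp s)"
    using m(1) by (auto simp: min_def add_nonneg_pos add_pos_nonneg)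
  finally show ?thesis by (simp add: mult_left_mono)
qed



lemma core:
  fixes n :: nat and c :: "nat \<Rightarrow> real" and s :: real
  assumes n: "n \<ge> 1" and cb: "\<And>u. u \<in> {1..n} \<Longrightarrow> \<bar>c u\<bar> \<le> 1"
    and c0: "(\<Sum>u\<in>{1..n}. c u) = 0" and s0: "s \<ge> 0"
  shows "(\<Sum>u\<in>{1..n}. exp (s * c u - 200 * ((exp (s * real u / (real n + 1)) - 1) *
            (exp (s * (real n + 1 - real u) / (real n + 1)) - 1)))) \<le> real n"
proof -
  define a where "a u = s * real u / (real n + 1)" for u
  define b where "b u = s * (real n + 1 - real u) / (real n + 1)" for u
  have a0: "a u \<ge> 0" for u using s0 by (simp add: a_def)
  have b0: "u \<in> {1..n} \<Longrightarrow> b u \<ge> 0" for u using s0 by (simp add: b_def)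
  have ab: "a u + b u = s" for u
  proof -
    have "a u + b u = (s * real u + s * (real n + 1 - real u)) / (real n + 1)" by (simp add: a_def b_def add_divide_distrib)
    also have "\<dots> = s * (real n + 1) / (real n + 1)" by (simp add: algebra_simps)
    also have "\<dots> = s" by simp
    finally show ?thesis .
  qed
  let ?T = "\<lambda>u. exp (s * c u - 200 * ((exp (a u) - 1) * (exp (b u) - 1)))"
  have "(\<Sum>u\<in>{1..n}. ?T u) \<le> real n"
  proof (cases "s \<le> 1/2")
    case True
    have step: "?T u \<le> 1 + s * c u + s\<^sup>2 - 7 * (a u * b u)" if u: "u \<in> {1..n}" for u
    proof (rule taylor_u)
      show "0 \<le> s" "s \<le> 1/2" by (fact s0, fact True)
      show "\<bar>c u\<bar> \<le> 1" using cb u by simp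
      show "0 \<le> a u * b u" using a0 b0 u by simp
      have sq: "(a u + b u)\<^sup>2 - 4 * (a u * b u) = (a u - b u)\<^sup>2" by (simp add: power2_eq_square algebra_simps)
      have "4 * (a u * b u) \<le> (a u + b u)\<^sup>2" using sq zero_le_power2[of "a u - b u"] by linarith
      also have "\<dots> = s\<^sup>2" by (simp add: ab)
      also have "\<dots> \<le> (1/2)\<^sup>2" using s0 True by (intro power_mono) auto
      finally show "a u * b u \<le> 1/16" by (simp add: power2_eq_square)
      have "(exp (a u) - 1) * (exp (b u) - 1) \<ge> a u * b u"
      proof (intro mult_mono)
        show "a u \<le> exp (a u) - 1" using exp_ge_add_one_self[of "a u"] by linarith
        show "b u \<le> exp (b u) - 1" using exp_ge_add_one_self[of "b u"] by linarith
        show "0 \<le> b u" using b0 u by simp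
        show "0 \<le> exp (a u) - 1" using a0[of u] by simp
      qed
      then show "200 * (a u * b u) \<le> 200 * ((exp (a u) - 1) * (exp (b u) - 1))" by simp
    qed
    have "(\<Sum>u\<in>{1..n}. ?T u) \<le> (\<Sum>u\<in>{1..n}. 1 + s * c u + s\<^sup>2 - 7 * (a u * b u))"
      by (rule sum_mono) (rule step)
    also have "\<dots> = real n + s * (\<Sum>u\<in>{1..n}. c u) + real n * s\<^sup>2 - 7 * (\<Sum>u\<in>{1..n}. a u * b u)"
      by (simp add: sum.distrib sum_subtractf sum_distrib_left)
    also have "(\<Sum>u\<in>{1..n}. a u * b u) = s\<^sup>2 / (real n + 1)\<^sup>2 * (\<Sum>u\<in>{1..n}. real u * ((real n + 1) - real u))"
      by (simp add: sum_distrib_left a_def b_def power2_eq_square field_simps)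
    also have "(\<Sum>u\<in>{1..n}. real u * ((real n + 1) - real u)) = real n * (real n + 1) * (real n + 2) / 6"
      using sum_um[where n=n and m="real n + 1"] by (simp add: algebra_simps)
    also have "real n + s * (\<Sum>u\<in>{1..n}. c u) + real n * s\<^sup>2 - 7 * (s\<^sup>2 / (real n + 1)\<^sup>2 * (real n * (real n + 1) * (real n + 2) / 6))
       = real n - s\<^sup>2 * real n * (7 * (real n + 2) - 6 * (real n + 1)) / (6 * (real n + 1))"
    proof -
      have np: "real n + 1 \<noteq> 0" by linarith
      have e1: "s\<^sup>2 / (real n + 1)\<^sup>2 * (real n * (real n + 1) * (real n + 2) / 6) = s\<^sup>2 * real n * (real n + 2) / (6 * (real n + 1))"
      proof -
        have gen: "\<And>x. x \<noteq> 0 \<Longrightarrow> s\<^sup>2 / x\<^sup>2 * (real n * x * (real n + 2) / 6) = s\<^sup>2 * real n * (real n + 2) / (6 * x)"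
          by (simp add: power2_eq_square field_simps)
        show ?thesis using gen[OF np] .
      qed
      show ?thesis unfolding e1 using c0 np by (simp add: field_simps)
    qed
    also have "\<dots> \<le> real n"
    proof -
      have "7 * (real n + 2) - 6 * (real n + 1) \<ge> 0" by simp
      then have "0 \<le> s\<^sup>2 * real n * (7 * (real n + 2) - 6 * (real n + 1)) / (6 * (real n + 1))"
        by (intro divide_nonneg_nonneg mult_nonneg_nonneg) auto
      then show ?thesis by (simp add: field_simps)
    qed
    finally show ?thesis .
  next
    case False
    then have s2: "s \<ge> 1/2" by simp
    define \<beta> where "\<beta> = 20 * exp s * s / (real n + 1)"
    have \<beta>0: "\<beta> > 0" using s2 by (simp add: \<beta>_def)
    have step: "?T u \<le> exp s * (exp (- \<beta> * real u) + exp (- \<beta> * real (Suc n - u)) + exp (- 20 * exp s))"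
      if u: "u \<in> {1..n}" for u
    proof -
      have "?T u \<le> exp s * (exp (- 20 * exp s * a u) + exp (- 20 * exp s * b u) + exp (- 20 * exp s))"
        using cb[OF u] a0 b0[OF u] ab by (intro crude_u s2) (auto simp: abs_le_iff)
      also have "- 20 * exp s * a u = - \<beta> * real u" by (simp add: a_def \<beta>_def)
      also have "- 20 * exp s * b u = - \<beta> * real (Suc n - u)" using u by (simp add: b_def \<beta>_def of_nat_diff)
      finally show ?thesis .
    qed
    have "(\<Sum>u\<in>{1..n}. ?T u) \<le> (\<Sum>u\<in>{1..n}. exp s * (exp (- \<beta> * real u) + exp (- \<beta> * real (Suc n - u)) + exp (- 20 * exp s)))"
      by (rule sum_mono) (rule step)
    also have "\<dots> = exp s * ((\<Sum>u\<in>{1..n}. exp (- \<beta> * real u)) + (\<Sum>u\<in>{1..n}. exp (- \<beta> * real (Suc n - u))) + real n * exp (- 20 * exp s))"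
      by (subst sum_distrib_left[symmetric]) (simp only: sum.distrib sum_constant card_atLeastAtMost, simp)
    also have "(\<Sum>u\<in>{1..n}. exp (- \<beta> * real (Suc n - u))) = (\<Sum>u\<in>{1..n}. exp (- \<beta> * real u))"
      by (rule sum.reindex_bij_witness[where i="\<lambda>u. Suc n - u" and j="\<lambda>u. Suc n - u"]) auto
    also have "exp s * ((\<Sum>u\<in>{1..n}. exp (- \<beta> * real u)) + (\<Sum>u\<in>{1..n}. exp (- \<beta> * real u)) + real n * exp (- 20 * exp s))
       \<le> exp s * (1 / \<beta> + 1 / \<beta> + real n * exp (- 20 * exp s))"
      using geo_sum[OF \<beta>0, of n] by (intro mult_left_mono add_mono) auto
    also have "\<dots> = (real n + 1) / (10 * s) + real n * exp (s - 20 * exp s)"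
      using s2 by (simp add: \<beta>_def exp_diff exp_minus field_simps)
    also have "\<dots> \<le> (real n + 1) / 5 + real n * (1/2)"
    proof (intro add_mono mult_left_mono)
      show "(real n + 1) / (10 * s) \<le> (real n + 1) / 5" using s2 by (intro divide_left_mono) auto
      have "exp s \<ge> 1 + s" by (rule exp_ge_add_one_self)
      then have "s - 20 * exp s \<le> -1" using s2 by linarith
      then have "exp (s - 20 * exp s) \<le> exp (-1)" by simp
      also have "exp (-1::real) \<le> 1/2"
      proof -
        have "exp (1::real) \<ge> 2" using exp_ge_add_one_self[of "1::real"] by simp
        then show ?thesis by (simp add: exp_minus field_simps)
      qed
      finally show "exp (s - 20 * exp s) \<le> 1/2" .
    qed auto
    also have "\<dots> \<le> real n"
    proof -
      have "real n \<ge> 1" using n by simp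
      then show ?thesis by (simp add: field_simps)
    qed
    finally show ?thesis .
  qed
  then show ?thesis by (simp add: a_def b_def)
qed



definition phi :: "real \<Rightarrow> real" where "phi x = 200 * (exp \<bar>x\<bar> - 1 - \<bar>x\<bar>)"

lemma phi_nonneg: "phi x \<ge> 0"
proof -
  have "exp \<bar>x\<bar> - 1 - \<bar>x\<bar> \<ge> 0" using exp_ge_add_one_self[of "\<bar>x\<bar>"] by linarith
  then show ?thesis unfolding phi_def by simp
qed

lemma E_nonneg: "E k l \<ge> 0"
  unfolding E_def by (rule integral_nonneg_AE) simp

lemma phi_split:
  fixes \<alpha> \<gamma> :: real assumes "\<alpha> \<ge> 0" "\<gamma> \<ge> 0"
  shows "phi \<alpha> + phi \<gamma> = phi (\<alpha> + \<gamma>) - 200 * ((exp \<alpha> - 1) * (exp \<gamma> - 1))"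
  using assms by (simp add: phi_def exp_add algebra_simps)

lemma E_bound: "E k l \<le> exp (phi (l * (real k + 1)))"
proof (induction k rule: less_induct)
  case (less k)
  show ?case
  proof (cases k)
    case 0
    have "E 0 l = 1" by (simp add: E_def qs_mean_def exp_return harm_def)
    then show ?thesis using 0 phi_nonneg[of "l * (real 0 + 1)"] by simp
  next
    case (Suc n)
    define C where "C u = real n + qs_mean (u-1) + qs_mean (Suc n - u) - qs_mean (Suc n)" for u
    define s where "s = \<bar>l\<bar> * (real n + 2)"
    define K where "K = (if l \<ge> 0 then 1 else -1) / (real n + 2)"
    define c where "c u = K * C u" for u
    define T where "T u = exp (s * c u - 200 * ((exp (s * real u / (real (Suc n) + 1)) - 1) *
            (exp (s * (real (Suc n) + 1 - real u) / (real (Suc n) + 1)) - 1)))" for u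
    have core_app: "(\<Sum>u\<in>{1..Suc n}. T u) \<le> real (Suc n)"
      unfolding T_def
    proof (rule core)
      show "1 \<le> Suc n" by simp
      show "0 \<le> s" by (simp add: s_def)
      show "\<bar>c u\<bar> \<le> 1" if "u \<in> {1..Suc n}" for u
        using toll_bounds[OF that] by (simp add: c_def K_def C_def abs_mult abs_divide)
      have "(\<Sum>u\<in>{1..Suc n}. c u) = K * (\<Sum>u\<in>{1..Suc n}. C u)"
        unfolding c_def by (rule sum_distrib_left[symmetric])
      also have "(\<Sum>u\<in>{1..Suc n}. C u) = 0" unfolding C_def by (rule toll_sum)
      finally show "(\<Sum>u\<in>{1..Suc n}. c u) = 0" by simp
    qed
    have trm: "exp (l * C u) * exp (phi (l * (real (u - 1) + 1))) * exp (phi (l * (real (Suc n - u) + 1)))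
        = exp (phi (l * (real k + 1))) * T u" if u: "u \<in> {1..Suc n}" for u
    proof -
      have r1: "real (u - 1) + 1 = real u" using u by (simp add: of_nat_diff)
      have r2: "real (Suc n - u) + 1 = real n + 2 - real u" using u by (simp add: of_nat_diff)
      have np: "real n + 2 \<noteq> 0" by linarith
      have sc: "s * c u = l * C u" using np by (simp add: s_def c_def K_def abs_if)
      have e2: "real (Suc n) + 1 = real n + 2" by simp
      have sa: "s * real u / (real (Suc n) + 1) = \<bar>l\<bar> * real u" unfolding e2 s_def using np by simp
      have sb: "s * (real (Suc n) + 1 - real u) / (real (Suc n) + 1) = \<bar>l\<bar> * (real n + 2 - real u)"
        unfolding e2 s_def using np by simp
      have nu: "real n + 2 - real u \<ge> 0" using u by simp
      have p1: "phi (l * real u) = phi (\<bar>l\<bar> * real u)" by (simp add: phi_def abs_mult)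
      have p2: "phi (l * (real n + 2 - real u)) = phi (\<bar>l\<bar> * (real n + 2 - real u))"
        using nu by (simp add: phi_def abs_mult)
      have p3: "phi (l * (real k + 1)) = phi (\<bar>l\<bar> * real u + \<bar>l\<bar> * (real n + 2 - real u))"
      proof -
        have "\<bar>l * (real k + 1)\<bar> = \<bar>l\<bar> * (real n + 2)" using Suc by (simp add: abs_mult)
        also have "\<dots> = \<bar>\<bar>l\<bar> * real u + \<bar>l\<bar> * (real n + 2 - real u)\<bar>" by (simp add: algebra_simps)
        finally show ?thesis unfolding phi_def by simp
      qed
      have split: "phi (\<bar>l\<bar> * real u) + phi (\<bar>l\<bar> * (real n + 2 - real u))
          = phi (l * (real k + 1)) - 200 * ((exp (\<bar>l\<bar> * real u) - 1) * (exp (\<bar>l\<bar> * (real n + 2 - real u)) - 1))"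
        unfolding p3 using nu by (intro phi_split) auto
      show ?thesis unfolding T_def r1 r2 sc sa sb p1 p2 mult_exp_exp
        by (rule arg_cong[where f=exp]) (use split in linarith)
    qed
    have "E k l = (\<Sum>u\<in>{1..Suc n}. exp (l * C u) * E (u-1) l * E (Suc n - u) l) / real (Suc n)"
      unfolding Suc E_Suc C_def by simp
    also have "\<dots> \<le> (\<Sum>u\<in>{1..Suc n}. exp (l * C u) * exp (phi (l * (real (u - 1) + 1))) * exp (phi (l * (real (Suc n - u) + 1)))) / real (Suc n)"
    proof (intro divide_right_mono sum_mono mult_mono)
      fix u assume u: "u \<in> {1..Suc n}"
      show "E (u - 1) l \<le> exp (phi (l * (real (u - 1) + 1)))" using less Suc u by (intro less.IH) auto
      show "E (Suc n - u) l \<le> exp (phi (l * (real (Suc n - u) + 1)))" using less Suc u by (intro less.IH) auto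
    qed (auto simp: E_nonneg)
    also have "\<dots> = (\<Sum>u\<in>{1..Suc n}. exp (phi (l * (real k + 1))) * T u) / real (Suc n)"
      using trm by (intro arg_cong[where f="\<lambda>x. x / real (Suc n)"] sum.cong) auto
    also have "\<dots> = exp (phi (l * (real k + 1))) * (\<Sum>u\<in>{1..Suc n}. T u) / real (Suc n)"
      by (simp only: sum_distrib_left)
    also have "\<dots> \<le> exp (phi (l * (real k + 1))) * real (Suc n) / real (Suc n)"
      using core_app by (intro divide_right_mono mult_left_mono) auto
    also have "\<dots> = exp (phi (l * (real k + 1)))" by simp
    finally show ?thesis .
  qed
qed



lemma tail_bound:
  fixes \<epsilon> :: real and n :: nat
  assumes eps: "\<epsilon> > 0" and n3: "n \<ge> 3"
  shows "measure_pmf.prob (qs_comparisons n)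
             {x. \<bar>real x - qs_mean n\<bar> \<ge> \<epsilon> * qs_mean n}
           \<le> real n powr (- 2 * \<epsilon> * ln (ln (real n)) + (201 + 4 * \<epsilon>))"
proof -
  let ?M = "measure_pmf (qs_comparisons n)"
  define \<mu> where "\<mu> = qs_mean n"
  define L where "L = ln (ln (real n))"
  define lam where "lam = L / (real n + 1)"
  have n0: "real n \<ge> 3" using n3 by simp
  have lnn1: "ln (real n) \<ge> 1"
  proof -
    have "exp 1 \<le> real n" using exp_le n0 by linarith
    then have "ln (exp 1) \<le> ln (real n)" using n0 by (subst ln_le_cancel_iff) auto
    then show ?thesis by simp
  qed
  have L0: "L \<ge> 0" unfolding L_def using lnn1 by simp
  have Lle: "L \<le> ln (real n)" unfolding L_def using ln_le_minus_one[of "ln (real n)"] lnn1 by linarith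
  have lam0: "lam \<ge> 0" unfolding lam_def using L0 by simp
  have int: "integrable ?M f" for f :: "nat \<Rightarrow> real"
    by (rule integrable_measure_pmf_finite[OF qs_fin])
  define c where "c = exp (lam * (\<epsilon> * \<mu>))"
  have c0: "c > 0" by (simp add: c_def)
  define A1 where "A1 = {x. c \<le> exp (lam * (real x - \<mu>))}"
  define A2 where "A2 = {x. c \<le> exp ((- lam) * (real x - \<mu>))}"
  have sub: "{x. \<bar>real x - qs_mean n\<bar> \<ge> \<epsilon> * qs_mean n} \<subseteq> A1 \<union> A2"
  proof
    fix x assume "x \<in> {x. \<bar>real x - qs_mean n\<bar> \<ge> \<epsilon> * qs_mean n}"
    then have "real x - \<mu> \<ge> \<epsilon> * \<mu> \<or> - (real x - \<mu>) \<ge> \<epsilon> * \<mu>" by (auto simp: \<mu>_def abs_if split: if_splits)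
    then show "x \<in> A1 \<union> A2"
    proof
      assume "real x - \<mu> \<ge> \<epsilon> * \<mu>"
      then have "lam * (\<epsilon> * \<mu>) \<le> lam * (real x - \<mu>)" using lam0 by (rule mult_left_mono)
      then have "x \<in> A1" unfolding A1_def c_def by simp
      then show ?thesis by blast
    next
      assume "- (real x - \<mu>) \<ge> \<epsilon> * \<mu>"
      then have "lam * (\<epsilon> * \<mu>) \<le> lam * (- (real x - \<mu>))" using lam0 by (rule mult_left_mono)
      then have "lam * (\<epsilon> * \<mu>) \<le> (- lam) * (real x - \<mu>)" by (simp add: algebra_simps)
      then have "x \<in> A2" unfolding A2_def c_def by simp
      then show ?thesis by blast
    qed
  qed
  have phiL: "phi L \<le> 200 * ln (real n)"
  proof -
    have eL: "exp L = ln (real n)" unfolding L_def using lnn1 by simp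
    have "phi L = 200 * (exp L - 1 - L)" unfolding phi_def using L0 by simp
    then have "phi L = 200 * ln (real n) - 200 - 200 * L" using eL by (simp add: algebra_simps)
    then show ?thesis using L0 by linarith
  qed
  have m1: "measure ?M A1 \<le> E n lam / c"
    unfolding A1_def E_def \<mu>_def
    using integral_Markov_inequality_measure[OF int, of UNIV "\<lambda>x. exp (lam * (real x - qs_mean n))" c] c0
    by simp
  have m2: "measure ?M A2 \<le> E n (-lam) / c"
    unfolding A2_def E_def \<mu>_def
    using integral_Markov_inequality_measure[OF int, of UNIV "\<lambda>x. exp ((-lam) * (real x - qs_mean n))" c] c0
    by simp
  have e1: "E n lam \<le> exp (200 * ln (real n))"
  proof -
    have "E n lam \<le> exp (phi (lam * (real n + 1)))" by (rule E_bound)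
    also have "lam * (real n + 1) = L" unfolding lam_def by simp
    finally show ?thesis using phiL by (meson exp_le_cancel_iff order_trans)
  qed
  have e2: "E n (-lam) \<le> exp (200 * ln (real n))"
  proof -
    have "E n (-lam) \<le> exp (phi (-lam * (real n + 1)))" by (rule E_bound)
    also have "phi (-lam * (real n + 1)) = phi L" unfolding lam_def phi_def by simp
    finally show ?thesis using phiL by (meson exp_le_cancel_iff order_trans)
  qed
  have mu_lb: "\<mu> / (real n + 1) \<ge> 2 * ln (real n) - 4"
  proof -
    have "ln (real n + 1) \<le> harm n" by (rule ln_le_harm)
    moreover have "ln (real n) \<le> ln (real n + 1)" using n0 by simp
    moreover have "\<mu> / (real n + 1) = 2 * harm n - 4 * real n / (real n + 1)"
      unfolding \<mu>_def qs_mean_def by (simp add: field_simps)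
    moreover have "4 * real n / (real n + 1) \<le> 4" by (simp add: field_simps)
    ultimately show ?thesis by linarith
  qed
  have lamc: "lam * (\<epsilon> * \<mu>) \<ge> \<epsilon> * L * (2 * ln (real n) - 4)"
  proof -
    have "lam * (\<epsilon> * \<mu>) = \<epsilon> * L * (\<mu> / (real n + 1))" unfolding lam_def by (simp add: field_simps)
    also have "\<dots> \<ge> \<epsilon> * L * (2 * ln (real n) - 4)"
      using mu_lb eps L0 by (intro mult_left_mono) auto
    finally show ?thesis .
  qed
  have "measure ?M {x. \<bar>real x - qs_mean n\<bar> \<ge> \<epsilon> * qs_mean n} \<le> measure ?M (A1 \<union> A2)"
    by (rule measure_pmf.finite_measure_mono[OF sub]) simp
  also have "\<dots> \<le> measure ?M A1 + measure ?M A2" by (rule measure_Un_le) auto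
  also have "\<dots> \<le> 2 * exp (200 * ln (real n)) / c"
  proof -
    have "E n lam / c \<le> exp (200 * ln (real n)) / c" using e1 c0 by (simp add: divide_right_mono)
    moreover have "E n (-lam) / c \<le> exp (200 * ln (real n)) / c" using e2 c0 by (simp add: divide_right_mono)
    ultimately have "measure ?M A1 + measure ?M A2 \<le> exp (200 * ln (real n)) / c + exp (200 * ln (real n)) / c"
      using m1 m2 by linarith
    then show ?thesis by simp
  qed
  also have "\<dots> = exp (ln 2 + 200 * ln (real n) - lam * (\<epsilon> * \<mu>))"
    by (simp add: c_def exp_diff exp_add)
  also have "\<dots> \<le> exp ((- 2 * \<epsilon> * L + (201 + 4 * \<epsilon>)) * ln (real n))"
  proof -
    have "ln 2 \<le> ln (real n)" using n0 by simp
    moreover have "\<epsilon> * L * 4 \<le> \<epsilon> * ln (real n) * 4" using Lle eps by simp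
    ultimately have "ln 2 + 200 * ln (real n) - \<epsilon> * L * (2 * ln (real n) - 4)
        \<le> (- 2 * \<epsilon> * L + (201 + 4 * \<epsilon>)) * ln (real n)"
      by (simp add: algebra_simps)
    then show ?thesis using lamc by simp
  qed
  also have "\<dots> = real n powr (- 2 * \<epsilon> * ln (ln (real n)) + (201 + 4 * \<epsilon>))"
    using n0 by (simp add: powr_def L_def)
  finally show ?thesis .
qed

theorem corollary7p4:
  fixes \<epsilon> :: real
  assumes "\<epsilon> > 0"
  shows "\<exists>K::real. \<forall>n::nat. n \<ge> 3 \<longrightarrow>
           measure_pmf.prob (qs_comparisons n)
             {x. \<bar>real x - qs_mean n\<bar> \<ge> \<epsilon> * qs_mean n}
           \<le> real n powr (- 2 * \<epsilon> * ln (ln (real n)) + K)"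
  using tail_bound[OF assms] by blast

end
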